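(* (1) If $L\subseteq A^*$ is accepted by a nondeterministic finite automaton having depth $m$, then ${\uparrow}L$ is $m$-PT while ${\uparrow}_<L$ and $\min(L)$ are $(m+1)$-PT. (2) The same conclusions hold if $L$ is accepted by a context-free grammar, with $m=\ell^N$, where $N$ is the number of nonterminal symbols and $\ell$ is the maximum length of the right-hand sides of the production rules.
   Context: The depth of an automaton is the maximum length of a simple (non-repeating) path from an initial state to some final state. $u\sqsubseteq v$ (subword) means $u=a_1\cdots a_n$ with letters $a_i$ and $v=v_0a_1v_1\cdots a_nv_n$; $u\sqsubset v$ means $u\sqsubseteq v$ and $u\ne v$. ${\uparrow}L=\{v~|~\exists u\in L: u\sqsubseteq v\}$, ${\uparrow}_<L=\{v~|~\exists u\in L:u\sqsubset v\}$, $\min(L)=\{u\in L~|~\forall v\in L: v\not\sqsubset u\}$. $u\sim_n v$ iff $u,v$ have the same subwords of length at most $n$; $L$ is $n$-PT if it is a union of $\sim_n$-classes. *)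

theory Defs
  imports Main "HOL-Library.Sublist"
begin

definition strict_subword :: "'a list \<Rightarrow> 'a list \<Rightarrow> bool" where
  "strict_subword u v \<longleftrightarrow> subseq u v \<and> u \<noteq> v"

definition up :: "'a set \<Rightarrow> 'a list set \<Rightarrow> 'a list set" where
  "up A L = {v \<in> lists A. \<exists>u\<in>L. subseq u v}"

definition up_strict :: "'a set \<Rightarrow> 'a list set \<Rightarrow> 'a list set" where
  "up_strict A L = {v \<in> lists A. \<exists>u\<in>L. strict_subword u v}"

definition min_lang :: "'a list set \<Rightarrow> 'a list set" where
  "min_lang L = {u \<in> L. \<forall>v\<in>L. \<not> strict_subword v u}"

definition subwords_upto :: "nat \<Rightarrow> 'a list \<Rightarrow> 'a list set" where
  "subwords_upto n w = {u. subseq u w \<and> length u \<le> n}"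

definition sim :: "nat \<Rightarrow> 'a list \<Rightarrow> 'a list \<Rightarrow> bool" where
  "sim n u v \<longleftrightarrow> subwords_upto n u = subwords_upto n v"

definition PT :: "nat \<Rightarrow> 'a set \<Rightarrow> 'a list set \<Rightarrow> bool" where
  "PT n A L \<longleftrightarrow> L \<subseteq> lists A \<and>
     (\<forall>u\<in>lists A. \<forall>v\<in>lists A. sim n u v \<longrightarrow> (u \<in> L \<longleftrightarrow> v \<in> L))"

record ('q, 'a) nfa =
  states :: "'q set"
  init :: "'q set"
  final :: "'q set"
  trans :: "('q \<times> 'a \<times> 'q) set"

definition nfa_over :: "'a set \<Rightarrow> ('q, 'a) nfa \<Rightarrow> bool" where
  "nfa_over A M \<longleftrightarrow> finite (states M) \<and> init M \<subseteq> states M \<and> final M \<subseteq> states M \<and>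
     trans M \<subseteq> states M \<times> A \<times> states M"

fun run :: "('q \<times> 'a \<times> 'q) set \<Rightarrow> 'q \<Rightarrow> 'a list \<Rightarrow> 'q \<Rightarrow> bool" where
  "run \<delta> q [] q' \<longleftrightarrow> q = q'"
| "run \<delta> q (a # w) q' \<longleftrightarrow> (\<exists>p. (q, a, p) \<in> \<delta> \<and> run \<delta> p w q')"

definition nfa_lang :: "('q, 'a) nfa \<Rightarrow> 'a list set" where
  "nfa_lang M = {w. \<exists>q\<in>init M. \<exists>q'\<in>final M. run (trans M) q w q'}"

definition simple_path :: "('q, 'a) nfa \<Rightarrow> 'q list \<Rightarrow> bool" where
  "simple_path M qs \<longleftrightarrow> qs \<noteq> [] \<and> distinct qs \<and> hd qs \<in> init M \<and> last qs \<in> final M \<and>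
     (\<forall>i. Suc i < length qs \<longrightarrow> (\<exists>a. (qs ! i, a, qs ! Suc i) \<in> trans M))"

definition nfa_depth :: "('q, 'a) nfa \<Rightarrow> nat" where
  "nfa_depth M = Max {length qs - 1 | qs. simple_path M qs}"

datatype ('n, 'a) symb = Nt 'n | Tm 'a

record ('n, 'a) cfg =
  nts :: "'n set"
  prods :: "('n \<times> ('n, 'a) symb list) set"
  start :: 'n

definition cfg_over :: "'a set \<Rightarrow> ('n, 'a) cfg \<Rightarrow> bool" where
  "cfg_over A G \<longleftrightarrow> finite (nts G) \<and> finite (prods G) \<and> start G \<in> nts G \<and>
     (\<forall>(X, \<alpha>)\<in>prods G. X \<in> nts G \<and>
        (\<forall>s\<in>set \<alpha>. case s of Nt Y \<Rightarrow> Y \<in> nts G | Tm a \<Rightarrow> a \<in> A))"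

definition cfg_step :: "('n, 'a) cfg \<Rightarrow> ('n, 'a) symb list \<Rightarrow> ('n, 'a) symb list \<Rightarrow> bool" where
  "cfg_step G u v \<longleftrightarrow> (\<exists>x X \<alpha> y. u = x @ [Nt X] @ y \<and> (X, \<alpha>) \<in> prods G \<and> v = x @ \<alpha> @ y)"

definition cfg_lang :: "('n, 'a) cfg \<Rightarrow> 'a list set" where
  "cfg_lang G = {w. (cfg_step G)\<^sup>*\<^sup>* [Nt (start G)] (map Tm w)}"

definition max_rhs :: "('n, 'a) cfg \<Rightarrow> nat" where
  "max_rhs G = Max ((\<lambda>(X, \<alpha>). length \<alpha>) ` prods G)"

end

theory Submission
  imports Defs
begin

lemma subseq_trans: "subseq x y \<Longrightarrow> subseq y z \<Longrightarrow> subseq x z"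
  using subseq_order.order_trans by blast

lemma sim_transfer: "sim n v v' \<Longrightarrow> subseq x v \<Longrightarrow> length x \<le> n \<Longrightarrow> subseq x v'"
  unfolding sim_def subwords_upto_def by blast

lemma sim_sym: "sim n u v \<Longrightarrow> sim n v u"
  unfolding sim_def by simp

lemma long_sub: "length u < length v \<Longrightarrow> \<exists>x. subseq x v \<and> length x = Suc (length u)"
  by (rule exI[of _ "take (Suc (length u)) v"]) (auto intro: prefix_imp_subseq simp: take_is_prefix)

lemma strict_len: "strict_subword u v \<Longrightarrow> length u < length v"
  unfolding strict_subword_def using subseq_same_length list_emb_length
  by (metis le_neq_implies_less)

locale shortw =
  fixes A :: "'a set" and L :: "'a list set" and m :: nat
  assumes LA: "L \<subseteq> lists A"
  and short: "\<And>w. w \<in> L \<Longrightarrow> \<exists>u\<in>L. subseq u w \<and> length u \<le> m"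
begin

lemma up_dir: "v \<in> up A L \<Longrightarrow> v' \<in> lists A \<Longrightarrow> sim m v v' \<Longrightarrow> v' \<in> up A L"
proof -
  assume v: "v \<in> up A L" and v': "v' \<in> lists A" and s: "sim m v v'"
  then obtain u0 where u0: "u0 \<in> L" "subseq u0 v" unfolding up_def by blast
  then obtain u where u: "u \<in> L" "subseq u u0" "length u \<le> m" using short by blast
  then have "subseq u v'" using sim_transfer[OF s] subseq_trans u0 by blast
  then show ?thesis using u v' unfolding up_def by blast
qed

lemma ups_dir: "v \<in> up_strict A L \<Longrightarrow> v' \<in> lists A \<Longrightarrow> sim (m+1) v v' \<Longrightarrow> v' \<in> up_strict A L"
proof -
  assume v: "v \<in> up_strict A L" and v': "v' \<in> lists A" and s: "sim (m+1) v v'"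
  then obtain u0 where u0: "u0 \<in> L" "strict_subword u0 v" unfolding up_strict_def by blast
  then obtain u where u: "u \<in> L" "subseq u u0" "length u \<le> m" using short by blast
  have uv: "subseq u v" using u u0 subseq_trans unfolding strict_subword_def by blast
  have "length u < length v" using list_emb_length[OF u(2)] strict_len[OF u0(2)] by simp
  then obtain x where x: "subseq x v" "length x = Suc (length u)" using long_sub by blast
  then have "subseq x v'" using sim_transfer[OF s] u(3) by simp
  then have "length v' > length u" using list_emb_length x(2) by fastforce
  moreover have "subseq u v'" using sim_transfer[OF s uv] u(3) by simp
  ultimately show ?thesis using u v' unfolding up_strict_def strict_subword_def by auto
qed

lemma min_dir: "v \<in> min_lang L \<Longrightarrow> v' \<in> lists A \<Longrightarrow> sim (m+1) v v' \<Longrightarrow> v' \<in> min_lang L"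
proof -
  assume v: "v \<in> min_lang L" and v': "v' \<in> lists A" and s: "sim (m+1) v v'"
  then have vL: "v \<in> L" and mn: "\<forall>w\<in>L. \<not> strict_subword w v" unfolding min_lang_def by auto
  then obtain u where u: "u \<in> L" "subseq u v" "length u \<le> m" using short by blast
  then have "u = v" using mn unfolding strict_subword_def by blast
  with u have lv: "length v \<le> m" by simp
  have vv: "subseq v v'" using sim_transfer[OF s] lv by simp
  have "v' = v"
  proof (rule ccontr)
    assume "v' \<noteq> v"
    then have "length v < length v'" using vv subseq_same_length list_emb_length
      by (metis le_neq_implies_less)
    then obtain x where x: "subseq x v'" "length x = Suc (length v)" using long_sub by blast
    then have "subseq x v" using sim_transfer[OF sim_sym[OF s] x(1)] lv x(2) by simp
    then show False using list_emb_length x(2) by fastforce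
  qed
  then show ?thesis using v by simp
qed

lemma all_PT: "PT m A (up A L) \<and> PT (m + 1) A (up_strict A L) \<and> PT (m + 1) A (min_lang L)"
proof (intro conjI)
  show "PT m A (up A L)" unfolding PT_def
  proof (intro conjI ballI impI)
    show "up A L \<subseteq> lists A" unfolding up_def by blast
    fix u v assume "u \<in> lists A" "v \<in> lists A" "sim m u v"
    then show "u \<in> up A L \<longleftrightarrow> v \<in> up A L" using up_dir[of u v] up_dir[of v u] sim_sym[of m u v] by blast
  qed
  show "PT (m + 1) A (up_strict A L)" unfolding PT_def
  proof (intro conjI ballI impI)
    show "up_strict A L \<subseteq> lists A" unfolding up_strict_def by blast
    fix u v assume "u \<in> lists A" "v \<in> lists A" "sim (m + 1) u v"
    then show "u \<in> up_strict A L \<longleftrightarrow> v \<in> up_strict A L"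
      using ups_dir[of u v] ups_dir[of v u] sim_sym[of "m + 1" u v] by blast
  qed
  show "PT (m + 1) A (min_lang L)" unfolding PT_def
  proof (intro conjI ballI impI)
    show "min_lang L \<subseteq> lists A" unfolding min_lang_def using LA by blast
    fix u v assume "u \<in> lists A" "v \<in> lists A" "sim (m + 1) u v"
    then show "u \<in> min_lang L \<longleftrightarrow> v \<in> min_lang L"
      using min_dir[of u v] min_dir[of v u] sim_sym[of "m + 1" u v] by blast
  qed
qed

end

inductive pathL :: "('q \<times> 'a \<times> 'q) set \<Rightarrow> 'q list \<Rightarrow> 'a list \<Rightarrow> bool" for \<delta> where
  pnil: "pathL \<delta> [q] []"
| pcons: "(q, a, hd qs) \<in> \<delta> \<Longrightarrow> pathL \<delta> qs u \<Longrightarrow> pathL \<delta> (q # qs) (a # u)"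

lemma pathL_ne: "pathL \<delta> qs u \<Longrightarrow> qs \<noteq> []"
  by (induction rule: pathL.induct) auto

lemma pathL_len: "pathL \<delta> qs u \<Longrightarrow> length qs = Suc (length u)"
  by (induction rule: pathL.induct) auto

lemma run_pathL: "run \<delta> q w q' \<Longrightarrow> \<exists>qs. pathL \<delta> qs w \<and> hd qs = q \<and> last qs = q'"
proof (induction w arbitrary: q)
  case Nil
  then show ?case by (auto intro: pnil)
next
  case (Cons a w)
  then obtain p where p: "(q, a, p) \<in> \<delta>" "run \<delta> p w q'" by auto
  then obtain qs where qs: "pathL \<delta> qs w" "hd qs = p" "last qs = q'" using Cons.IH by blast
  then have "pathL \<delta> (q # qs) (a # w)" using p by (auto intro: pcons)
  then show ?case using qs pathL_ne[OF qs(1)] by auto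
qed

lemma pathL_run: "pathL \<delta> qs w \<Longrightarrow> run \<delta> (hd qs) w (last qs)"
  by (induction rule: pathL.induct) (auto dest: pathL_ne)

lemma pathL_suffix: "pathL \<delta> (xs @ ys) u \<Longrightarrow> ys \<noteq> [] \<Longrightarrow> pathL \<delta> ys (drop (length xs) u)"
proof (induction xs arbitrary: u)
  case Nil
  then show ?case by simp
next
  case (Cons x xs)
  from Cons.prems(1) show ?case
  proof (cases rule: pathL.cases)
    case pnil
    then show ?thesis using Cons.prems by simp
  next
    case (pcons a qs u')
    then show ?thesis using Cons by simp
  qed
qed

lemma pathL_distinct: "pathL \<delta> qs w \<Longrightarrow> \<exists>qs' u. pathL \<delta> qs' u \<and> subseq u w \<and> distinct qs'
   \<and> hd qs' = hd qs \<and> last qs' = last qs"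
proof (induction rule: pathL.induct)
  case (pnil q)
  then show ?case by (intro exI[of _ "[q]"] exI[of _ "[]"]) (auto intro: pathL.pnil)
next
  case (pcons q a qs u)
  then obtain qs' u' where IH: "pathL \<delta> qs' u'" "subseq u' u" "distinct qs'"
    "hd qs' = hd qs" "last qs' = last qs" by blast
  have ne: "qs \<noteq> []" "qs' \<noteq> []" using pathL_ne pcons.hyps(2) IH(1) by auto
  show ?case
  proof (cases "q \<in> set qs'")
    case False
    have "pathL \<delta> (q # qs') (a # u')" using pcons.hyps(1) IH by (auto intro: pathL.pcons)
    then show ?thesis using IH False ne by (intro exI[of _ "q # qs'"] exI[of _ "a # u'"]) auto
  next
    case True
    then obtain xs ys where sp: "qs' = xs @ q # ys" by (meson split_list)
    have p: "pathL \<delta> (q # ys) (drop (length xs) u')" using pathL_suffix IH(1) sp by fastforce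
    have "subseq (drop (length xs) u') u'" by (auto intro: suffix_imp_subseq simp: suffix_drop)
    then have "subseq (drop (length xs) u') (a # u)" using IH(2) subseq_trans by blast
    moreover have "distinct (q # ys)" using IH(3) sp by simp
    moreover have "last (q # ys) = last (q # qs)" using IH(5) sp ne by auto
    ultimately show ?thesis using p by (intro exI[of _ "q # ys"] exI[of _ "drop (length xs) u'"]) auto
  qed
qed

lemma pathL_trans: "pathL \<delta> qs w \<Longrightarrow> Suc i < length qs \<Longrightarrow> \<exists>a. (qs ! i, a, qs ! Suc i) \<in> \<delta>"
proof (induction arbitrary: i rule: pathL.induct)
  case (pnil q)
  then show ?case by simp
next
  case (pcons q a qs u)
  show ?case
  proof (cases i)
    case 0
    then show ?thesis using pcons pathL_ne[OF pcons.hyps(2)] by (auto simp: hd_conv_nth)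
  next
    case (Suc j)
    then show ?thesis using pcons by auto
  qed
qed

lemma run_lists: "run \<delta> q w q' \<Longrightarrow> \<delta> \<subseteq> S \<times> A \<times> S \<Longrightarrow> w \<in> lists A"
  by (induction w arbitrary: q) auto

lemma simple_states: assumes "nfa_over A M" "simple_path M qs" shows "set qs \<subseteq> states M"
proof
  fix x assume "x \<in> set qs"
  then obtain i where i: "i < length qs" "qs ! i = x" by (auto simp: in_set_conv_nth)
  show "x \<in> states M"
  proof (cases i)
    case 0
    then show ?thesis using assms i unfolding simple_path_def nfa_over_def by (auto simp: hd_conv_nth)
  next
    case (Suc j)
    then obtain a where "(qs ! j, a, qs ! i) \<in> trans M" using assms i unfolding simple_path_def by auto
    then show ?thesis using assms i unfolding nfa_over_def by auto
  qed
qed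

lemma nfa_short:
  assumes M: "nfa_over A M" and w: "w \<in> nfa_lang M"
  shows "\<exists>u\<in>nfa_lang M. subseq u w \<and> length u \<le> nfa_depth M"
proof -
  obtain q q' where qq: "q \<in> init M" "q' \<in> final M" "run (trans M) q w q'"
    using w unfolding nfa_lang_def by blast
  obtain qs where qs: "pathL (trans M) qs w" "hd qs = q" "last qs = q'" using run_pathL[OF qq(3)] by blast
  obtain qs' u where u: "pathL (trans M) qs' u" "subseq u w" "distinct qs'" "hd qs' = q" "last qs' = q'"
    using pathL_distinct[OF qs(1)] qs by auto
  have sp: "simple_path M qs'" unfolding simple_path_def using u qq pathL_ne[OF u(1)] pathL_trans[OF u(1)] by auto
  have uL: "u \<in> nfa_lang M" unfolding nfa_lang_def using pathL_run[OF u(1)] u qq by auto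
  have fin: "finite {length qs - 1 | qs. simple_path M qs}"
  proof (rule finite_subset[of _ "{..card (states M)}"])
    show "{length qs - 1 | qs. simple_path M qs} \<subseteq> {..card (states M)}"
    proof
      fix n assume "n \<in> {length qs - 1 | qs. simple_path M qs}"
      then obtain ps where ps: "n = length ps - 1" "simple_path M ps" by blast
      have "length ps = card (set ps)" using ps(2) distinct_card unfolding simple_path_def by metis
      also have "\<dots> \<le> card (states M)" using simple_states[OF M ps(2)] M card_mono unfolding nfa_over_def by blast
      finally show "n \<in> {..card (states M)}" using ps by simp
    qed
  qed simp
  have "length qs' - 1 \<le> nfa_depth M" unfolding nfa_depth_def using fin sp by (auto intro!: Max_ge)
  then have "length u \<le> nfa_depth M" using pathL_len[OF u(1)] by simp
  then show ?thesis using uL u by blast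
qed

lemma nfa_part: assumes M: "nfa_over A M" shows "shortw A (nfa_lang M) (nfa_depth M)"
proof
  show "nfa_lang M \<subseteq> lists A"
  proof
    fix w assume "w \<in> nfa_lang M"
    then obtain q q' where "run (trans M) q w q'" unfolding nfa_lang_def by blast
    moreover have "trans M \<subseteq> states M \<times> A \<times> states M" using M unfolding nfa_over_def by blast
    ultimately show "w \<in> lists A" by (rule run_lists)
  qed
next
  fix w assume "w \<in> nfa_lang M"
  then show "\<exists>u\<in>nfa_lang M. subseq u w \<and> length u \<le> nfa_depth M" by (rule nfa_short[OF M])
qed


inductive gs :: "('n \<times> ('n, 'a) symb list) set \<Rightarrow> 'n set \<Rightarrow> ('n, 'a) symb list \<Rightarrow> 'a list \<Rightarrow> bool"
  for P V where
  gnil: "gs P V [] []"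
| gtm: "gs P V \<alpha> w \<Longrightarrow> gs P V (Tm a # \<alpha>) (a # w)"
| gnt: "(Y, \<beta>) \<in> P \<Longrightarrow> Y \<in> V \<Longrightarrow> gs P V \<beta> u \<Longrightarrow> gs P V \<alpha> w \<Longrightarrow> gs P V (Nt Y # \<alpha>) (u @ w)"

lemma gs_single: "(Y, \<beta>) \<in> P \<Longrightarrow> Y \<in> V \<Longrightarrow> gs P V \<beta> u \<Longrightarrow> gs P V [Nt Y] u"
  using gnt[OF _ _ _ gnil] by fastforce

lemma gs_Nil: assumes "gs P V [] w" shows "w = []"
  using assms by (cases rule: gs.cases) auto

lemma gs_single_inv: assumes "gs P V [Nt Y] u" shows "\<exists>\<beta>. (Y, \<beta>) \<in> P \<and> Y \<in> V \<and> gs P V \<beta> u"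
  using assms
proof (cases rule: gs.cases)
  case gnt
  then show ?thesis by (metis gs_Nil append_Nil2)
qed

lemma gs_mono: "gs P V \<alpha> w \<Longrightarrow> V \<subseteq> W \<Longrightarrow> gs P W \<alpha> w"
  by (induction rule: gs.induct) (auto intro: gs.intros)

lemma gs_Tm_inv1: assumes "gs P V (Tm a # \<alpha>) w" shows "\<exists>w'. w = a # w' \<and> gs P V \<alpha> w'"
  using assms by (cases rule: gs.cases) auto

lemma gs_Nt_inv1: assumes "gs P V (Nt Y # \<alpha>) w"
  shows "\<exists>\<beta> u w'. w = u @ w' \<and> (Y, \<beta>) \<in> P \<and> Y \<in> V \<and> gs P V \<beta> u \<and> gs P V \<alpha> w'"
  using assms by (cases rule: gs.cases) auto

lemma gs_append: "gs P V (x @ y) w \<longleftrightarrow> (\<exists>w1 w2. w = w1 @ w2 \<and> gs P V x w1 \<and> gs P V y w2)"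
proof (induction x arbitrary: w)
  case Nil
  show ?case
  proof
    assume "gs P V ([] @ y) w" then show "\<exists>w1 w2. w = w1 @ w2 \<and> gs P V [] w1 \<and> gs P V y w2"
      by (intro exI[of _ "[]"] exI[of _ w]) (simp add: gnil)
  next
    assume "\<exists>w1 w2. w = w1 @ w2 \<and> gs P V [] w1 \<and> gs P V y w2"
    then obtain w1 w2 where "w = w1 @ w2" "gs P V [] w1" "gs P V y w2" by blast
    then show "gs P V ([] @ y) w" using gs_Nil[of P V w1] by simp
  qed
next
  case (Cons s x)
  show ?case
  proof (cases s)
    case (Tm a)
    show ?thesis
    proof
      assume "gs P V ((s # x) @ y) w"
      then obtain w' where w': "w = a # w'" "gs P V (x @ y) w'" using Tm gs_Tm_inv1[of P V a "x @ y" w] by auto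
      then obtain w1 w2 where "w' = w1 @ w2" "gs P V x w1" "gs P V y w2" using Cons.IH by blast
      then show "\<exists>w1 w2. w = w1 @ w2 \<and> gs P V (s # x) w1 \<and> gs P V y w2"
        using w' Tm by (intro exI[of _ "a # w1"] exI[of _ w2]) (auto intro: gs.gtm)
    next
      assume "\<exists>w1 w2. w = w1 @ w2 \<and> gs P V (s # x) w1 \<and> gs P V y w2"
      then obtain w1 w2 where ww: "w = w1 @ w2" "gs P V (Tm a # x) w1" "gs P V y w2" using Tm by blast
      then obtain w1' where w1': "w1 = a # w1'" "gs P V x w1'" using gs_Tm_inv1[OF ww(2)] by blast
      then have "gs P V (x @ y) (w1' @ w2)" using Cons.IH ww by blast
      then show "gs P V ((s # x) @ y) w" using Tm ww w1' gs.gtm[of P V "x @ y" "w1' @ w2" a] by simp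
    qed
  next
    case (Nt Y)
    show ?thesis
    proof
      assume "gs P V ((s # x) @ y) w"
      then obtain \<beta> u w' where w': "w = u @ w'" "(Y, \<beta>) \<in> P" "Y \<in> V" "gs P V \<beta> u" "gs P V (x @ y) w'"
        using Nt gs_Nt_inv1[of P V Y "x @ y" w] by auto
      then obtain w1 w2 where "w' = w1 @ w2" "gs P V x w1" "gs P V y w2" using Cons.IH by blast
      then show "\<exists>w1 w2. w = w1 @ w2 \<and> gs P V (s # x) w1 \<and> gs P V y w2"
        using w' Nt by (intro exI[of _ "u @ w1"] exI[of _ w2]) (auto intro: gs.gnt)
    next
      assume "\<exists>w1 w2. w = w1 @ w2 \<and> gs P V (s # x) w1 \<and> gs P V y w2"
      then obtain w1 w2 where ww: "w = w1 @ w2" "gs P V (Nt Y # x) w1" "gs P V y w2" using Nt by blast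
      then obtain \<beta> u w1' where w1': "w1 = u @ w1'" "(Y, \<beta>) \<in> P" "Y \<in> V" "gs P V \<beta> u" "gs P V x w1'"
        using gs_Nt_inv1[OF ww(2)] by blast
      then have xy: "gs P V (x @ y) (w1' @ w2)" using Cons.IH ww by blast
      have "gs P V (Nt Y # (x @ y)) (u @ (w1' @ w2))" using gs.gnt[OF w1'(2,3,4) xy] .
      then show "gs P V ((s # x) @ y) w" using Nt ww w1' by simp
    qed
  qed
qed

lemma gs_map_Tm: "gs P V (map Tm w) w"
  by (induction w) (auto intro: gs.intros)

lemma gs_Tm_inv: "gs P V (map Tm w) u \<Longrightarrow> u = w"
proof (induction w arbitrary: u)
  case Nil
  then show ?case by (simp add: gs_Nil)
next
  case (Cons a w)
  from Cons.prems show ?case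
  proof (cases rule: gs.cases)
    case (gtm \<alpha>' w' b)
    then show ?thesis using Cons.IH by simp
  qed auto
qed

lemma step_gs:
  assumes G: "cfg_over A G" and st: "cfg_step G \<alpha> \<beta>" and g: "gs (prods G) (nts G) \<beta> w"
  shows "gs (prods G) (nts G) \<alpha> w"
proof -
  obtain x X \<gamma> y where s: "\<alpha> = x @ [Nt X] @ y" "(X, \<gamma>) \<in> prods G" "\<beta> = x @ \<gamma> @ y"
    using st unfolding cfg_step_def by blast
  have X: "X \<in> nts G" using G s(2) unfolding cfg_over_def by auto
  obtain w1 w2 w3 where ws: "w = w1 @ w2 @ w3" "gs (prods G) (nts G) x w1"
    "gs (prods G) (nts G) \<gamma> w2" "gs (prods G) (nts G) y w3"
    using g s(3) gs_append by metis
  have "gs (prods G) (nts G) [Nt X] w2" using gs_single[OF s(2) X ws(3)] .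
  then show ?thesis using ws s(1) gs_append by metis
qed

lemma lang_gs:
  assumes G: "cfg_over A G" and w: "w \<in> cfg_lang G"
  shows "gs (prods G) (nts G) [Nt (start G)] w"
proof -
  have "(cfg_step G)\<^sup>*\<^sup>* [Nt (start G)] (map Tm w)" using w unfolding cfg_lang_def by simp
  then show ?thesis
  proof (induction rule: converse_rtranclp_induct)
    case base
    then show ?case by (rule gs_map_Tm)
  next
    case (step y z)
    then show ?case using step_gs[OF G] by blast
  qed
qed

lemma step_ctx: "cfg_step G u v \<Longrightarrow> cfg_step G (x @ u @ y) (x @ v @ y)"
  unfolding cfg_step_def by (metis append.assoc)

lemma steps_ctx: "(cfg_step G)\<^sup>*\<^sup>* u v \<Longrightarrow> (cfg_step G)\<^sup>*\<^sup>* (x @ u @ y) (x @ v @ y)"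
  by (induction rule: rtranclp_induct) (auto intro: rtranclp.rtrancl_into_rtrancl step_ctx)

lemma gs_steps: "gs (prods G) V \<alpha> w \<Longrightarrow> (cfg_step G)\<^sup>*\<^sup>* \<alpha> (map Tm w)"
proof (induction rule: gs.induct)
  case (gnil)
  then show ?case by simp
next
  case (gtm \<alpha> w a)
  then show ?case using steps_ctx[of G \<alpha> "map Tm w" "[Tm a]" "[]"] by simp
next
  case (gnt Y \<beta> u \<alpha> w)
  have s1: "cfg_step G (Nt Y # \<alpha>) (\<beta> @ \<alpha>)"
    unfolding cfg_step_def using gnt(1) by (intro exI[of _ "[]"] exI[of _ Y] exI[of _ \<beta>] exI[of _ \<alpha>]) simp
  have s2: "(cfg_step G)\<^sup>*\<^sup>* (\<beta> @ \<alpha>) (map Tm u @ \<alpha>)"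
    using steps_ctx[OF gnt(5), of "[]" \<alpha>] by simp
  have s3: "(cfg_step G)\<^sup>*\<^sup>* (map Tm u @ \<alpha>) (map Tm u @ map Tm w)"
    using steps_ctx[OF gnt(6), of "map Tm u" "[]"] by simp
  show ?case using s1 s2 s3 by simp
qed

lemma gs_lists: "gs P V \<alpha> w \<Longrightarrow> (\<forall>(X, \<beta>)\<in>P. \<forall>s\<in>set \<beta>. case s of Nt Y \<Rightarrow> True | Tm a \<Rightarrow> a \<in> A)
  \<Longrightarrow> (\<forall>s\<in>set \<alpha>. case s of Nt Y \<Rightarrow> True | Tm a \<Rightarrow> a \<in> A) \<Longrightarrow> w \<in> lists A"
  by (induction rule: gs.induct) fastforce+

lemma gs_split:
  "gs P V \<alpha> w \<Longrightarrow> gs P (V - {X0}) \<alpha> w \<or> (\<exists>w' \<beta>. subseq w' w \<and> (X0, \<beta>) \<in> P \<and> gs P (V - {X0}) \<beta> w')"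
proof (induction rule: gs.induct)
  case (gnil)
  then show ?case by (auto intro: gs.gnil)
next
  case (gtm \<alpha> w a)
  then show ?case by (auto intro: gs.gtm)
next
  case (gnt Y \<beta> u \<alpha> w)
  show ?case
  proof (cases "gs P (V - {X0}) \<beta> u \<and> gs P (V - {X0}) \<alpha> w")
    case True
    show ?thesis
    proof (cases "Y = X0")
      case True
      then show ?thesis using \<open>gs P (V - {X0}) \<beta> u \<and> _\<close> gnt(1) by blast
    next
      case False
      then show ?thesis using True gnt(1,2) by (auto intro: gs.gnt)
    qed
  next
    case False
    then have "(\<exists>w' \<beta>. subseq w' u \<and> (X0, \<beta>) \<in> P \<and> gs P (V - {X0}) \<beta> w') \<or>
      (\<exists>w' \<beta>. subseq w' w \<and> (X0, \<beta>) \<in> P \<and> gs P (V - {X0}) \<beta> w')" using gnt.IH by blast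
    then show ?thesis using subseq_trans by blast
  qed
qed

lemma gs_shorten:
  assumes "gs P W \<beta> w"
    and IH: "\<And>Y w. gs P W [Nt Y] w \<Longrightarrow> \<exists>u. subseq u w \<and> gs P W [Nt Y] u \<and> length u \<le> K"
  shows "\<exists>u. subseq u w \<and> gs P W \<beta> u \<and> length u \<le> length \<beta> * max 1 K"
  using assms(1)
proof (induction rule: gs.induct)
  case gnil
  then show ?case by (auto intro: gs.gnil)
next
  case (gtm \<alpha> w a)
  then obtain u where "subseq u w" "gs P W \<alpha> u" "length u \<le> length \<alpha> * max 1 K" by blast
  then show ?case by (intro exI[of _ "a # u"]) (auto intro: gs.gtm)
next
  case (gnt Y \<beta> u \<alpha> w)
  obtain u2 where u2: "subseq u2 w" "gs P W \<alpha> u2" "length u2 \<le> length \<alpha> * max 1 K" using gnt.IH(2) by blast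
  have "gs P W [Nt Y] u" using gs_single gnt by metis
  then obtain u1 where u1: "subseq u1 u" "gs P W [Nt Y] u1" "length u1 \<le> K" using IH by blast
  then obtain \<gamma> where g: "(Y, \<gamma>) \<in> P" "Y \<in> W" "gs P W \<gamma> u1" using gs_single_inv by metis
  have "gs P W (Nt Y # \<alpha>) (u1 @ u2)" using gs.gnt[OF g u2(2)] .
  moreover have "subseq (u1 @ u2) (u @ w)" using u1 u2 list_emb_append_mono by blast
  moreover have "length (u1 @ u2) \<le> length (Nt Y # \<alpha>) * max 1 K" using u1(3) u2(3) by simp
  ultimately show ?case by blast
qed

lemma gs_in: "gs P V [Nt X] w \<Longrightarrow> X \<in> V"
  using gs_single_inv by metis

lemma cfg_bound:
  assumes fin: "finite V" and len: "\<And>X \<beta>. (X, \<beta>) \<in> P \<Longrightarrow> length \<beta> \<le> l"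
  shows "gs P V [Nt X] w \<Longrightarrow> \<exists>u. subseq u w \<and> gs P V [Nt X] u \<and> length u \<le> l ^ card V"
  using fin
proof (induction "card V" arbitrary: V X w rule: less_induct)
  case less
  have XV: "X \<in> V" using gs_in less.prems(1) .
  have "\<not> gs P (V - {X}) [Nt X] w" using gs_in[of P "V - {X}" X w] by blast
  then obtain w' \<beta> where wb: "subseq w' w" "(X, \<beta>) \<in> P" "gs P (V - {X}) \<beta> w'"
    using gs_split[OF less.prems(1), of X] by blast
  have cV: "card (V - {X}) < card V" using card_Diff1_less[OF less.prems(2) XV] .
  have IH': "\<And>Y w. gs P (V - {X}) [Nt Y] w \<Longrightarrow> \<exists>u. subseq u w \<and> gs P (V - {X}) [Nt Y] u \<and> length u \<le> l ^ card (V - {X})"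
    using less.hyps[OF cV] less.prems(2) by blast
  obtain u where u: "subseq u w'" "gs P (V - {X}) \<beta> u" "length u \<le> length \<beta> * max 1 (l ^ card (V - {X}))"
    using gs_shorten[OF wb(3) IH'] by blast
  have "gs P V [Nt X] u" using gs_single[OF wb(2) XV gs_mono[OF u(2)]] by blast
  moreover have "subseq u w" using u(1) wb(1) subseq_trans by blast
  moreover have "length u \<le> l ^ card V"
  proof (cases "l = 0")
    case True
    then show ?thesis using len[OF wb(2)] u(3) by simp
  next
    case False
    have cc: "card V = Suc (card (V - {X}))" using card_Suc_Diff1[OF less.prems(2) XV] by simp
    have p: "1 \<le> l ^ card (V - {X})" using False by (simp add: Suc_le_eq)
    then have "length u \<le> length \<beta> * l ^ card (V - {X})" using u(3) by (simp add: max_def)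
    also have "\<dots> \<le> l * l ^ card (V - {X})" using len[OF wb(2)] by (rule mult_le_mono1)
    finally have "length u \<le> l * l ^ card (V - {X})" .
    then show ?thesis using cc by simp
  qed
  ultimately show ?case by blast
qed

lemma cfg_part: assumes G: "cfg_over A G" shows "shortw A (cfg_lang G) (max_rhs G ^ card (nts G))"
proof
  show "cfg_lang G \<subseteq> lists A"
  proof
    fix w assume "w \<in> cfg_lang G"
    then have "gs (prods G) (nts G) [Nt (start G)] w" using lang_gs[OF G] by blast
    then show "w \<in> lists A" apply (rule gs_lists[where A = A])
      using G unfolding cfg_over_def by (auto split: symb.splits)
  qed
next
  fix w assume w: "w \<in> cfg_lang G"
  then have g: "gs (prods G) (nts G) [Nt (start G)] w" using lang_gs[OF G] by blast
  have len: "\<And>X \<beta>. (X, \<beta>) \<in> prods G \<Longrightarrow> length \<beta> \<le> max_rhs G"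
    unfolding max_rhs_def using G unfolding cfg_over_def
    by (metis (mono_tags, lifting) Max_ge case_prod_conv finite_imageI image_eqI)
  have fin: "finite (nts G)" using G unfolding cfg_over_def by simp
  have ex: "\<exists>u. subseq u w \<and> gs (prods G) (nts G) [Nt (start G)] u \<and> length u \<le> max_rhs G ^ card (nts G)"
    by (rule cfg_bound[OF fin len g])
  then obtain u where u: "subseq u w" "gs (prods G) (nts G) [Nt (start G)] u" "length u \<le> max_rhs G ^ card (nts G)"
    by (elim exE conjE) simp
  have "u \<in> cfg_lang G" unfolding cfg_lang_def using gs_steps[OF u(2)] by simp
  then show "\<exists>u\<in>cfg_lang G. subseq u w \<and> length u \<le> max_rhs G ^ card (nts G)" using u by blast
qed

theorem theorem10:
  fixes A :: "'a set"
  assumes "finite A"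
  shows "(\<forall>M :: ('q, 'a) nfa. nfa_over A M \<longrightarrow>
            (let L = nfa_lang M; m = nfa_depth M in
               PT m A (up A L) \<and> PT (m + 1) A (up_strict A L) \<and> PT (m + 1) A (min_lang L)))
       \<and> (\<forall>G :: ('n, 'a) cfg. cfg_over A G \<longrightarrow>
            (let L = cfg_lang G; m = max_rhs G ^ card (nts G) in
               PT m A (up A L) \<and> PT (m + 1) A (up_strict A L) \<and> PT (m + 1) A (min_lang L)))"
proof (intro conjI allI impI)
  fix M :: "('q, 'a) nfa" assume "nfa_over A M"
  then show "let L = nfa_lang M; m = nfa_depth M in
               PT m A (up A L) \<and> PT (m + 1) A (up_strict A L) \<and> PT (m + 1) A (min_lang L)"
    unfolding Let_def by (rule shortw.all_PT[OF nfa_part])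
next
  fix G :: "('n, 'a) cfg" assume "cfg_over A G"
  then show "let L = cfg_lang G; m = max_rhs G ^ card (nts G) in
               PT m A (up A L) \<and> PT (m + 1) A (up_strict A L) \<and> PT (m + 1) A (min_lang L)"
    unfolding Let_def by (rule shortw.all_PT[OF cfg_part])
qed

end
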